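(* (a) For all $\beta,\eta,\hat v(0)>0$ and $\mu\in\mathbb{R}$, the equation $$\sum_{p\in\Lambda^*}\frac{1}{e^{\beta(p^2-\widetilde\mu)}-1}=\frac{(\mu-\widetilde\mu)\eta}{\hat v(0)}$$ has a unique solution $\widetilde\mu\in(-\infty,0)$. (b) Fix $\kappa\in(0,\infty)$, $\hat v(0)>0$ and $c_0\in(0,1]$, and let $\beta=\kappa\beta_{\mathrm c}(\eta)$ with $\beta_{\mathrm c}(\eta)=\frac{1}{4\pi}\big(\frac{\eta}{\zeta(3/2)}\big)^{-2/3}$. There exist constants $c\in(0,1]$, $C>0$ and $\eta_0>0$ (depending on $\kappa,\hat v(0),c_0$) such that for all $\eta\ge\eta_0$ and all $\mu$ with $-c_0^{-1}\eta^{2/3}\le\mu\le c_0^{-1}$, the solution $\widetilde\mu$ of (a) satisfies $c\le\mu-\widetilde\mu\le c^{-1}$; moreover $-\widetilde\mu\le C$ if $\mu\ge0$, and $-\widetilde\mu\le C\eta^{2/3}$ if $\mu<0$. (c) Under the assumptions of (b), possibly after decreasing $c$, $\;c\eta\le\sum_{p\in\Lambda^*}\frac{1}{e^{\beta(p^2-\widetilde\mu)}-1}\le c^{-1}\eta$.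
   Context: $\Lambda^*=2\pi\mathbb{Z}^3$ (the dual lattice of the unit torus $[0,1]^3$); $\zeta$ is the Riemann zeta function; $\hat v(0)>0$ is a given positive constant. *)

theory Defs
  imports "HOL-Analysis.Analysis"
begin

text \<open>Dual lattice \<Lambda>* = 2\<pi>Z^3, parametrised by n \<in> Z^3 via p = 2\<pi> n.\<close>

definition lattice_pt :: "int \<times> int \<times> int \<Rightarrow> real \<times> real \<times> real" where
  "lattice_pt n = (case n of (a, b, c) \<Rightarrow> (2*pi*real_of_int a, 2*pi*real_of_int b, 2*pi*real_of_int c))"

definition psq :: "int \<times> int \<times> int \<Rightarrow> real" where
  "psq n = (case lattice_pt n of (x, y, z) \<Rightarrow> x^2 + y^2 + z^2)"

definition bose_sum :: "real \<Rightarrow> real \<Rightarrow> real" where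
  "bose_sum \<beta> m = (\<Sum>\<^sub>\<infinity>n\<in>(UNIV :: (int \<times> int \<times> int) set). 1 / (exp (\<beta> * (psq n - m)) - 1))"

definition zeta32 :: real where
  "zeta32 = (\<Sum>k. 1 / (real (Suc k)) powr (3/2))"

definition beta_c :: "real \<Rightarrow> real" where
  "beta_c \<eta> = (1 / (4*pi)) * (\<eta> / zeta32) powr (-(2/3))"

end

theory Submission
  imports Defs
begin


definition gB :: "real \<Rightarrow> real" where "gB x = 1 / (exp x - 1)"
definition NN :: "int \<times> int \<times> int \<Rightarrow> int" where
  "NN n = (case n of (x,y,z) \<Rightarrow> x^2 + y^2 + z^2)"
definition MM :: "int \<times> int \<times> int \<Rightarrow> nat" where
  "MM n = (case n of (x,y,z) \<Rightarrow> nat (max \<bar>x\<bar> (max \<bar>y\<bar> \<bar>z\<bar>)))"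
definition bx :: "nat \<Rightarrow> (int \<times> int \<times> int) set" where
  "bx R = {-int R..int R} \<times> {-int R..int R} \<times> {-int R..int R}"

lemma psq_eq: "psq n = 4 * pi^2 * real_of_int (NN n)"
  by (cases n) (simp add: psq_def lattice_pt_def NN_def power_mult_distrib algebra_simps)

lemma NN_ge_MM: "real (MM n)^2 \<le> real_of_int (NN n)"
proof (cases n)
  case (fields x y z)
  define m where "m = max \<bar>x\<bar> (max \<bar>y\<bar> \<bar>z\<bar>)"
  have m0: "m \<ge> 0" by (simp add: m_def)
  have "m = \<bar>x\<bar> \<or> m = \<bar>y\<bar> \<or> m = \<bar>z\<bar>" by (simp add: m_def max_def)
  hence "m^2 = x^2 \<or> m^2 = y^2 \<or> m^2 = z^2" by auto
  hence "m^2 \<le> x^2 + y^2 + z^2"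
    using zero_le_power2[of x] zero_le_power2[of y] zero_le_power2[of z] by linarith
  hence "real_of_int (m^2) \<le> real_of_int (x^2 + y^2 + z^2)" by (simp only: of_int_le_iff)
  moreover have "real (nat m) = real_of_int m" using m0 by simp
  ultimately show ?thesis using fields by (simp add: NN_def MM_def m_def[symmetric])
qed

lemma MM_pos: "n \<noteq> 0 \<Longrightarrow> MM n \<ge> 1"
  by (cases n) (auto simp: MM_def zero_prod_def)

lemma NN_nonneg: "NN n \<ge> 0"
  by (cases n) (simp add: NN_def)

lemma NN_zero[simp]: "NN 0 = 0" by (simp add: NN_def zero_prod_def)

lemma box_iff: "n \<in> bx R \<longleftrightarrow> MM n \<le> R"
  by (cases n) (auto simp: bx_def MM_def)

lemma finite_box[simp]: "finite (bx R)"
  by (simp add: bx_def)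

lemma card_box: "card (bx R) = (2*R+1)^3"
proof -
  have "card {-int R..int R} = 2*R+1" by simp
  then show ?thesis by (simp add: bx_def card_cartesian_product power3_eq_cube)
qed


lemma gB_pos: "x > 0 \<Longrightarrow> 0 < gB x"
  by (simp add: gB_def)

lemma gB_anti: "0 < x \<Longrightarrow> x \<le> y \<Longrightarrow> gB y \<le> gB x"
  unfolding gB_def by (rule divide_left_mono) auto

lemma gB_le_inv: assumes "x > 0" shows "gB x \<le> 1 / x"
proof -
  have "x \<le> exp x - 1" using exp_ge_add_one_self[of x] by linarith
  then show ?thesis unfolding gB_def using assms by (intro divide_left_mono) auto
qed

lemma gB_le_sq: assumes "x > 0" shows "gB x \<le> 4 / x^2"
proof -
  have h1: "1 + x/2 \<le> exp (x/2)" by (rule exp_ge_add_one_self)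
  have h2: "(1 + x/2) * (1 + x/2) \<le> exp (x/2) * exp (x/2)" using assms h1 by (intro mult_mono) auto
  have h3: "exp (x/2) * exp (x/2) = exp x" by (simp flip: exp_add)
  have h4: "(1 + x/2) * (1 + x/2) = 1 + x + x^2/4" by (simp add: power2_eq_square field_simps)
  have "x^2/4 \<le> exp x - 1" using assms h2 h3 h4 by linarith
  hence "1 / (exp x - 1) \<le> 1 / (x^2/4)" using assms by (intro divide_left_mono) auto
  then show ?thesis unfolding gB_def by simp
qed

lemma gB_ge_exp: assumes "x > 0" shows "exp (-x) \<le> gB x"
  unfolding gB_def using assms by (simp add: exp_minus field_simps)

lemma gB_ge: assumes "0 < x" "x < 1" shows "1/x - 1 \<le> gB x"
proof -
  have "1 - x \<le> exp (-x)" by (rule exp_minus_ge)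
  hence "exp x * (1 - x) \<le> 1" by (simp add: exp_minus field_simps)
  hence "exp x - 1 \<le> x * exp x" by (simp add: algebra_simps)
  have e1: "exp x - 1 > 0" using assms by simp
  have "(1 - x) * (exp x - 1) \<le> x"
    using \<open>exp x * (1 - x) \<le> 1\<close> by (simp add: algebra_simps)
  hence "(1 - x) / x \<le> 1 / (exp x - 1)" using assms e1
    by (simp add: field_simps)
  then show ?thesis using assms by (simp add: gB_def field_simps)
qed

lemma gB_lip:
  assumes "0 < x1" "x1 \<le> x2"
  shows "gB x1 - gB x2 \<le> (x2 - x1) * exp (x2 - x1) * (gB x1 * (1 + gB x1))"
proof -
  define d where "d = x2 - x1"
  have d0: "d \<ge> 0" using assms by (simp add: d_def)
  have e1: "exp x1 - 1 > 0" using assms by simp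
  have e2: "exp x2 - 1 \<ge> exp x1 - 1" using assms by simp
  have "1 - d \<le> exp (-d)" by (rule exp_minus_ge)
  hence ed: "exp d - 1 \<le> d * exp d" by (simp add: exp_minus field_simps)
  have x2: "exp x2 = exp x1 * exp d" by (simp add: d_def flip: exp_add)
  have "gB x1 - gB x2 = (exp x2 - exp x1) / ((exp x1 - 1) * (exp x2 - 1))"
    using e1 e2 by (simp add: gB_def field_simps)
  also have "\<dots> \<le> (exp x2 - exp x1) / ((exp x1 - 1) * (exp x1 - 1))"
    using e1 e2 assms by (intro divide_left_mono mult_left_mono) auto
  also have "exp x2 - exp x1 = exp x1 * (exp d - 1)" by (simp add: x2 algebra_simps)
  also have "\<dots> \<le> exp x1 * (d * exp d)" using ed by simp
  also have "exp x1 * (d * exp d) / ((exp x1 - 1) * (exp x1 - 1)) =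
      d * exp d * (gB x1 * (1 + gB x1))"
    using e1 by (simp add: gB_def field_simps)
  finally have "gB x1 - gB x2 \<le> d * exp d * (gB x1 * (1 + gB x1))"
    using e1 by (simp add: divide_right_mono)
  then show ?thesis by (simp only: d_def)
qed




lemma bx_mono: "R \<le> R' \<Longrightarrow> bx R \<subseteq> bx R'"
  by (auto simp: box_iff)

lemma bx0: "bx 0 = {0}"
  by (auto simp: bx_def zero_prod_def)

lemma shell_iff: "n \<in> bx (Suc R) - bx R \<longleftrightarrow> MM n = Suc R"
  by (auto simp: box_iff)

lemma card_shell: "real (card (bx (Suc R) - bx R)) \<le> 26 * real (Suc R)^2"
proof -
  have "card (bx (Suc R) - bx R) = card (bx (Suc R)) - card (bx R)"
    using bx_mono[of R "Suc R"] by (intro card_Diff_subset) simp_all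
  also have "\<dots> = (2*Suc R+1)^3 - (2*R+1)^3" by (simp only: card_box)
  finally have c: "card (bx (Suc R) - bx R) = (2*Suc R+1)^3 - (2*R+1)^3" .
  have le: "(2*R+1)^3 \<le> (2*Suc R+1)^3" by (intro power_mono) auto
  have "real ((2*Suc R+1)^3 - (2*R+1)^3) = real ((2*Suc R+1)^3) - real ((2*R+1)^3)"
    using le by (simp add: of_nat_diff)
  also have "\<dots> = 24 * real R ^ 2 + 48 * real R + 26"
    by (simp add: power3_eq_cube power2_eq_square algebra_simps)
  also have "\<dots> \<le> 26 * real (Suc R)^2"
    by (simp add: power2_eq_square algebra_simps)
  finally show ?thesis using c by simp
qed

lemma shell_sum:
  assumes nn: "\<And>k. \<phi> k \<ge> (0::real)"
  shows "(\<Sum>n\<in>bx R - {0}. \<phi> (MM n)) \<le> (\<Sum>k=1..R. 26 * real k^2 * \<phi> k)"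
proof (induction R)
  case 0
  then show ?case by (simp add: bx0)
next
  case (Suc R)
  have split: "bx (Suc R) - {0} = (bx R - {0}) \<union> (bx (Suc R) - bx R)"
    using bx_mono[of R "Suc R"] bx0 bx_mono[of 0 R] by auto
  have disj: "(bx R - {0}) \<inter> (bx (Suc R) - bx R) = {}" by auto
  have "(\<Sum>n\<in>bx (Suc R) - {0}. \<phi> (MM n)) =
        (\<Sum>n\<in>bx R - {0}. \<phi> (MM n)) + (\<Sum>n\<in>bx (Suc R) - bx R. \<phi> (MM n))"
    unfolding split by (rule sum.union_disjoint) (use disj in auto)
  also have "(\<Sum>n\<in>bx (Suc R) - bx R. \<phi> (MM n)) = (\<Sum>n\<in>bx (Suc R) - bx R. \<phi> (Suc R))"
    by (intro sum.cong refl) (metis shell_iff)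
  also have "\<dots> = real (card (bx (Suc R) - bx R)) * \<phi> (Suc R)" by simp
  also have "\<dots> \<le> 26 * real (Suc R)^2 * \<phi> (Suc R)"
    by (rule mult_right_mono[OF card_shell nn])
  finally show ?case using Suc.IH by simp
qed

lemma tail_sum:
  assumes "1 \<le> K" "K \<le> R"
  shows "(\<Sum>k\<in>{K<..R}. 1 / real k^2) \<le> 1 / real K - 1 / real R"
  using assms(2)
proof (induction R rule: dec_induct)
  case base
  then show ?case by simp
next
  case (step R)
  have R1: "real R \<ge> 1" using assms step by simp
  have ins: "{K<..Suc R} = insert (Suc R) {K<..R}" using step by auto
  have "(\<Sum>k\<in>{K<..Suc R}. 1 / real k^2) = 1 / real (Suc R)^2 + (\<Sum>k\<in>{K<..R}. 1 / real k^2)"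
    unfolding ins by (subst sum.insert) auto
  also have "\<dots> \<le> 1 / real (Suc R)^2 + (1 / real K - 1 / real R)" using step.IH by simp
  also have "1 / real (Suc R)^2 \<le> 1 / real R - 1 / real (Suc R)"
  proof -
    have "1 / real (Suc R)^2 \<le> 1 / (real R * real (Suc R))"
      using R1 by (intro divide_left_mono) (auto simp: power2_eq_square)
    also have "1 / (real R * real (Suc R)) = 1 / real R - 1 / real (Suc R)"
      using R1 by (simp add: field_simps)
    finally show ?thesis .
  qed
  finally show ?case by simp
qed




definition hh :: "real \<Rightarrow> real \<Rightarrow> int \<times> int \<times> int \<Rightarrow> real" where
  "hh b a n = gB (b * real_of_int (NN n) + a)"

lemma NN_le_MM: "real_of_int (NN n) \<le> 3 * real (MM n)^2"
proof (cases n)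
  case (fields x y z)
  define m where "m = max \<bar>x\<bar> (max \<bar>y\<bar> \<bar>z\<bar>)"
  have m0: "m \<ge> 0" by (simp add: m_def)
  have "\<bar>x\<bar> \<le> m" "\<bar>y\<bar> \<le> m" "\<bar>z\<bar> \<le> m" by (auto simp: m_def)
  hence "\<bar>x\<bar>^2 \<le> m^2" "\<bar>y\<bar>^2 \<le> m^2" "\<bar>z\<bar>^2 \<le> m^2"
    by (intro power_mono; simp)+
  hence "x^2 + y^2 + z^2 \<le> 3 * m^2" by simp
  hence "real_of_int (x^2 + y^2 + z^2) \<le> real_of_int (3 * m^2)" by (simp only: of_int_le_iff)
  moreover have "real (nat m) = real_of_int m" using m0 by simp
  ultimately show ?thesis using fields by (simp add: NN_def MM_def m_def[symmetric])
qed

lemma NN_pos: "n \<noteq> 0 \<Longrightarrow> real_of_int (NN n) \<ge> 1"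
proof -
  assume "n \<noteq> 0"
  hence "real (MM n) \<ge> 1" using MM_pos by simp
  hence "1 \<le> real (MM n)^2" by simp
  thus ?thesis using NN_ge_MM[of n] by linarith
qed

lemma hh_pos: "b > 0 \<Longrightarrow> a > 0 \<Longrightarrow> hh b a n > 0"
  unfolding hh_def using NN_nonneg[of n]
  by (intro gB_pos) (simp add: add_nonneg_pos)

lemma hh_pos': "b > 0 \<Longrightarrow> a \<ge> 0 \<Longrightarrow> n \<noteq> 0 \<Longrightarrow> hh b a n > 0"
  unfolding hh_def using NN_pos[of n]
  by (intro gB_pos) (smt (verit) mult_pos_pos)

lemma hh_pt:
  assumes b: "b > 0" and a: "a \<ge> 0" and n: "n \<noteq> 0" and K: "K \<ge> 1"
  shows "hh b a n \<le> (if MM n \<le> K then 1 / (b * real (MM n)^2) else 4 / (b^2 * real (MM n)^4))"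
proof -
  define M where "M = real (MM n)"
  have M1: "M \<ge> 1" using MM_pos[OF n] by (simp add: M_def)
  have bm: "b * M^2 > 0" using b M1 by simp
  have "b * M^2 \<le> b * real_of_int (NN n)" using NN_ge_MM[of n] b by (simp add: M_def)
  hence le: "b * M^2 \<le> b * real_of_int (NN n) + a" using a by linarith
  have "hh b a n \<le> gB (b * M^2)" unfolding hh_def by (rule gB_anti[OF bm le])
  moreover have "gB (b * M^2) \<le> 1 / (b * M^2)" by (rule gB_le_inv[OF bm])
  moreover have "gB (b * M^2) \<le> 4 / (b * M^2)^2" by (rule gB_le_sq[OF bm])
  moreover have "(b * M^2)^2 = b^2 * M^4" by (simp add: power_mult_distrib flip: power_mult)
  ultimately show ?thesis by (auto simp: M_def)
qed

lemma psi_sum: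
  assumes b: "b > 0" and K: "K \<ge> (1::nat)"
  shows "(\<Sum>k=1..R. (if k \<le> K then 26 / b else 104 / (b^2 * real k^2))) \<le> 26 * real K / b + 104 / (b^2 * real K)"
proof (cases "R \<le> K")
  case True
  have "(\<Sum>k=1..R. (if k \<le> K then 26 / b else 104 / (b^2 * real k^2))) = (\<Sum>k=1..R. 26 / b)"
    by (intro sum.cong) (use True in auto)
  also have "\<dots> = 26 * real R / b" by simp
  also have "\<dots> \<le> 26 * real K / b" using True b by (intro divide_right_mono) auto
  finally have "(\<Sum>k=1..R. (if k \<le> K then 26 / b else 104 / (b^2 * real k^2))) \<le> 26 * real K / b" .
  moreover have "0 \<le> 104 / (b^2 * real K)" using b by simp
  ultimately show ?thesis by linarith
next
  case False
  have un: "{1..R} = {1..K} \<union> {K<..R}" using False K by auto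
  have "(\<Sum>k=1..R. (if k \<le> K then 26 / b else 104 / (b^2 * real k^2))) =
     (\<Sum>k=1..K. (if k \<le> K then 26 / b else 104 / (b^2 * real k^2))) +
     (\<Sum>k\<in>{K<..R}. (if k \<le> K then 26 / b else 104 / (b^2 * real k^2)))"
    unfolding un by (rule sum.union_disjoint) auto
  also have "(\<Sum>k=1..K. (if k \<le> K then 26 / b else 104 / (b^2 * real k^2))) = (\<Sum>k=1..K. 26 / b)"
    by (intro sum.cong) auto
  also have "\<dots> = 26 * real K / b" by simp
  also have "(\<Sum>k\<in>{K<..R}. (if k \<le> K then 26 / b else 104 / (b^2 * real k^2))) =
       (\<Sum>k\<in>{K<..R}. 104 / b^2 * (1 / real k^2))"
    by (intro sum.cong) auto
  also have "\<dots> = 104 / b^2 * (\<Sum>k\<in>{K<..R}. 1 / real k^2)" by (simp add: sum_distrib_left)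
  also have "\<dots> \<le> 104 / b^2 * (1 / real K - 1 / real R)"
    using tail_sum[OF K, of R] False b by (intro mult_left_mono) auto
  also have "\<dots> \<le> 104 / b^2 * (1 / real K)"
    using b by (intro mult_left_mono) auto
  finally show ?thesis by simp
qed

lemma fin_bound:
  assumes b: "b > 0" and a: "a \<ge> 0" and K: "K \<ge> 1" and F: "finite F"
  shows "(\<Sum>n\<in>F - {0}. hh b a n) \<le> 26 * real K / b + 104 / (b^2 * real K)"
proof -
  define R where "R = (\<Sum>n\<in>F. MM n)"
  have FR: "F \<subseteq> bx R"
  proof
    fix n assume "n \<in> F"
    hence "MM n \<le> R" unfolding R_def using F by (intro member_le_sum) auto
    thus "n \<in> bx R" by (simp add: box_iff)
  qed
  define \<phi> where "\<phi> k = (if k \<le> K then 1 / (b * real k^2) else 4 / (b^2 * real k^4))" for k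
  have \<phi>0: "\<phi> k \<ge> 0" for k using b by (simp add: \<phi>_def)
  have "(\<Sum>n\<in>F - {0}. hh b a n) \<le> (\<Sum>n\<in>bx R - {0}. hh b a n)"
    using FR b a hh_pos' by (intro sum_mono2) (auto intro: less_imp_le)
  also have "\<dots> \<le> (\<Sum>n\<in>bx R - {0}. \<phi> (MM n))"
    using hh_pt[OF b a _ K] by (intro sum_mono) (simp add: \<phi>_def)
  also have "\<dots> \<le> (\<Sum>k=1..R. 26 * real k^2 * \<phi> k)" by (rule shell_sum[OF \<phi>0])
  also have "(\<Sum>k=1..R. 26 * real k^2 * \<phi> k) = (\<Sum>k=1..R. (if k \<le> K then 26 / b else 104 / (b^2 * real k^2)))"
  proof (intro sum.cong refl)
    fix k assume "k \<in> {1..R}"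
    hence k1: "real k \<ge> 1" by simp
    show "26 * real k^2 * \<phi> k = (if k \<le> K then 26 / b else 104 / (b^2 * real k^2))"
      using k1 b by (simp add: \<phi>_def field_simps power2_eq_square power4_eq_xxxx)
  qed
  also have "\<dots> \<le> 26 * real K / b + 104 / (b^2 * real K)" by (rule psi_sum[OF b K])
  finally show ?thesis .
qed




lemma fin_bound2:
  assumes b: "b > 0" and a: "a > 0" and K: "K \<ge> 1" and F: "finite F"
  shows "sum (hh b a) F \<le> hh b a 0 + (26 * real K / b + 104 / (b^2 * real K))"
proof -
  have "sum (hh b a) F \<le> sum (hh b a) (insert 0 F)"
    using F hh_pos[OF b a] by (intro sum_mono2) (auto intro: less_imp_le)
  also have "\<dots> = hh b a 0 + sum (hh b a) (F - {0})"
    using F by (simp add: sum.insert_remove)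
  also have "\<dots> \<le> hh b a 0 + (26 * real K / b + 104 / (b^2 * real K))"
    using fin_bound[OF b less_imp_le[OF a] K F] by simp
  finally show ?thesis .
qed

lemma hh_summable:
  assumes b: "b > 0" and a: "a > 0"
  shows "hh b a summable_on UNIV"
proof (rule nonneg_bdd_above_summable_on)
  show "\<And>x. x \<in> UNIV \<Longrightarrow> 0 \<le> hh b a x" using hh_pos[OF b a] by (simp add: less_imp_le)
  show "bdd_above (sum (hh b a) ` {F. F \<subseteq> UNIV \<and> finite F})"
    using fin_bound2[OF b a order_refl] by (intro bdd_aboveI) auto
qed

lemma hh_upper:
  assumes b: "b > 0" and a: "a > 0" and K: "K \<ge> 1"
  shows "infsum (hh b a) UNIV \<le> hh b a 0 + (26 * real K / b + 104 / (b^2 * real K))"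
  by (rule infsum_le_finite_sums[OF hh_summable[OF b a]]) (use fin_bound2[OF b a K] in auto)

lemma hh_ge0:
  assumes b: "b > 0" and a: "a > 0"
  shows "hh b a n \<le> infsum (hh b a) UNIV"
proof -
  have "sum (hh b a) {n} \<le> infsum (hh b a) UNIV"
    using hh_pos[OF b a] by (intro finite_sum_le_infsum[OF hh_summable[OF b a]]) (auto intro: less_imp_le)
  thus ?thesis by simp
qed

lemma hh_lower:
  assumes b: "b > 0" "b \<le> 1" and a: "a > 0"
  shows "exp (-(a+3)) * (1 / sqrt b)^3 \<le> infsum (hh b a) UNIV"
proof -
  define w where "w = 1 / sqrt b"
  have w1: "w \<ge> 1" using b by (simp add: w_def)
  define K where "K = nat \<lfloor>w\<rfloor>"
  have Kw: "real K \<le> w" using w1 by (simp add: K_def)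
  have wK: "w < real K + 1" using w1 by (simp add: K_def)
  have bK: "b * real K^2 \<le> 1"
  proof -
    have "real K^2 \<le> w^2" using Kw by (intro power_mono) auto
    also have "w^2 = 1 / b" using b by (simp add: w_def power_divide)
    finally show ?thesis using b by (simp add: field_simps)
  qed
  have pt: "exp (-(a+3)) \<le> hh b a n" if "n \<in> bx K" for n
  proof -
    have "MM n \<le> K" using that by (simp add: box_iff)
    hence "real (MM n)^2 \<le> real K^2" by (intro power_mono) auto
    hence "real_of_int (NN n) \<le> 3 * real K^2" using NN_le_MM[of n] by linarith
    hence "b * real_of_int (NN n) \<le> b * (3 * real K^2)" using b by (intro mult_left_mono) auto
    hence x3: "b * real_of_int (NN n) + a \<le> a + 3" using bK by linarith
    have xp: "b * real_of_int (NN n) + a > 0" using NN_nonneg[of n] b a by (simp add: add_nonneg_pos)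
    have "exp (-(a+3)) \<le> exp (-(b * real_of_int (NN n) + a))" using x3 by simp
    also have "\<dots> \<le> hh b a n" unfolding hh_def by (rule gB_ge_exp[OF xp])
    finally show ?thesis .
  qed
  have "exp (-(a+3)) * w^3 \<le> exp (-(a+3)) * real (card (bx K))"
  proof (intro mult_left_mono)
    have "w \<le> real (2*K+1)" using wK by simp
    hence "w^3 \<le> real (2*K+1)^3" using w1 by (intro power_mono) auto
    thus "w^3 \<le> real (card (bx K))" by (simp add: card_box)
  qed simp
  also have "\<dots> = (\<Sum>n\<in>bx K. exp (-(a+3)))" by simp
  also have "\<dots> \<le> sum (hh b a) (bx K)" using pt by (intro sum_mono) auto
  also have "\<dots> \<le> infsum (hh b a) UNIV"
    using hh_pos[OF b(1) a] by (intro finite_sum_le_infsum[OF hh_summable[OF b(1) a]]) (auto intro: less_imp_le)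
  finally show ?thesis by (simp add: w_def)
qed

lemma bose_hh: "bose_sum \<beta> m = infsum (hh (4 * pi^2 * \<beta>) (- \<beta> * m)) UNIV"
proof -
  have "(\<lambda>n. 1 / (exp (\<beta> * (psq n - m)) - 1)) = hh (4 * pi^2 * \<beta>) (- \<beta> * m)"
    by (rule ext) (simp add: hh_def gB_def psq_eq algebra_simps)
  thus ?thesis by (simp add: bose_sum_def)
qed




lemma gB_strict: "0 < x \<Longrightarrow> x < y \<Longrightarrow> gB y < gB x"
  unfolding gB_def by (rule divide_strict_left_mono) auto

lemma hh_anti: "b > 0 \<Longrightarrow> 0 < a2 \<Longrightarrow> a2 \<le> a1 \<Longrightarrow> hh b a1 n \<le> hh b a2 n"
  unfolding hh_def using NN_nonneg[of n]
  by (intro gB_anti) (auto simp: add_nonneg_pos)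

lemma hh_lip:
  assumes b: "b > 0" and alo: "0 < alo" "alo \<le> a2" and a: "a2 \<le> a1"
  shows "hh b a2 n \<le> hh b a1 n + ((a1 - a2) * exp (a1 - a2) * (1 + gB alo)) * hh b a2 n"
proof -
  define x1 where "x1 = b * real_of_int (NN n) + a2"
  define x2 where "x2 = b * real_of_int (NN n) + a1"
  have N0: "b * real_of_int (NN n) \<ge> 0" using NN_nonneg[of n] b by simp
  have x1p: "0 < x1" using N0 alo by (simp add: x1_def)
  have x12: "x1 \<le> x2" using a by (simp add: x1_def x2_def)
  have d: "x2 - x1 = a1 - a2" by (simp add: x1_def x2_def)
  have g1: "gB x1 \<le> gB alo" using N0 alo by (intro gB_anti) (auto simp: x1_def)
  have g1p: "gB x1 > 0" using gB_pos[OF x1p] .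
  have "gB x1 - gB x2 \<le> (a1 - a2) * exp (a1 - a2) * (gB x1 * (1 + gB x1))"
    using gB_lip[OF x1p x12] d by simp
  also have "\<dots> \<le> (a1 - a2) * exp (a1 - a2) * (gB x1 * (1 + gB alo))"
    using a g1 g1p by (intro mult_left_mono) auto
  finally have h: "gB x1 - gB x2 \<le> (a1 - a2) * exp (a1 - a2) * (gB x1 * (1 + gB alo))" .
  have h1: "hh b a2 n = gB x1" "hh b a1 n = gB x2" by (simp_all add: hh_def x1_def x2_def)
  have h2: "(a1 - a2) * exp (a1 - a2) * (gB x1 * (1 + gB alo)) = ((a1 - a2) * exp (a1 - a2) * (1 + gB alo)) * gB x1"
    by (simp only: mult_ac)
  show ?thesis unfolding h1 using h h2 by linarith
qed

context
  fixes \<beta> :: real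
  assumes \<beta>: "\<beta> > 0"
begin

lemma bsum_mono: "m1 \<le> m2 \<Longrightarrow> m2 < 0 \<Longrightarrow> bose_sum \<beta> m1 \<le> bose_sum \<beta> m2"
  unfolding bose_hh using \<beta>
  by (intro infsum_mono hh_summable hh_anti) (auto simp: mult_pos_neg)

lemma bsum_strict: "m1 < m2 \<Longrightarrow> m2 < 0 \<Longrightarrow> bose_sum \<beta> m1 < bose_sum \<beta> m2"
proof -
  assume m: "m1 < m2" "m2 < 0"
  have b: "4 * pi^2 * \<beta> > 0" using \<beta> by simp
  have a2: "- \<beta> * m2 > 0" "- \<beta> * m1 > 0" using \<beta> m by (auto simp: mult_pos_neg)
  have a12: "- \<beta> * m2 < - \<beta> * m1" using \<beta> m by simp
  show ?thesis unfolding bose_hh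
  proof (rule has_sum_strict_mono)
    show "(hh (4 * pi^2 * \<beta>) (- \<beta> * m1) has_sum infsum (hh (4 * pi^2 * \<beta>) (- \<beta> * m1)) UNIV) UNIV"
      using hh_summable[OF b a2(2)] by (simp add: has_sum_infsum)
    show "(hh (4 * pi^2 * \<beta>) (- \<beta> * m2) has_sum infsum (hh (4 * pi^2 * \<beta>) (- \<beta> * m2)) UNIV) UNIV"
      using hh_summable[OF b a2(1)] by (simp add: has_sum_infsum)
    show "\<And>x. x \<in> UNIV \<Longrightarrow> hh (4 * pi^2 * \<beta>) (- \<beta> * m1) x \<le> hh (4 * pi^2 * \<beta>) (- \<beta> * m2) x"
      using hh_anti[OF b a2(1) less_imp_le[OF a12]] by simp
    show "0 \<in> UNIV" by simp
    show "hh (4 * pi^2 * \<beta>) (- \<beta> * m1) 0 < hh (4 * pi^2 * \<beta>) (- \<beta> * m2) 0"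
      unfolding hh_def using gB_strict[OF a2(1) a12] by simp
  qed
qed

lemma bsum_lip:
  assumes m: "m1 \<le> m2" "m2 \<le> mb" "mb < 0" "ma \<le> m1"
  shows "bose_sum \<beta> m2 - bose_sum \<beta> m1 \<le>
     (\<beta> * exp (\<beta> * (mb - ma)) * (1 + gB (- \<beta> * mb)) * bose_sum \<beta> mb) * (m2 - m1)"
proof -
  define b where "b = 4 * pi^2 * \<beta>"
  have b0: "b > 0" using \<beta> by (simp add: b_def)
  define a1 where "a1 = - \<beta> * m1"
  define a2 where "a2 = - \<beta> * m2"
  define alo where "alo = - \<beta> * mb"
  have alo: "0 < alo" "alo \<le> a2" using \<beta> m by (auto simp: alo_def a2_def mult_pos_neg)
  have a12: "a2 \<le> a1" using \<beta> m by (simp add: a1_def a2_def)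
  have a1p: "a1 > 0" using alo a12 by simp
  define L where "L = (a1 - a2) * exp (a1 - a2) * (1 + gB alo)"
  have "infsum (hh b a2) UNIV \<le> infsum (\<lambda>n. hh b a1 n + L * hh b a2 n) UNIV"
    using hh_lip[OF b0 alo a12]
    by (intro infsum_mono hh_summable summable_on_add summable_on_cmult_right b0 a1p alo(1)[THEN order_less_le_trans, OF alo(2)]) (auto simp: L_def)
  also have "\<dots> = infsum (hh b a1) UNIV + L * infsum (hh b a2) UNIV"
    using b0 a1p alo by (subst infsum_add) (auto intro!: hh_summable summable_on_cmult_right simp: infsum_cmult_right')
  finally have 1: "infsum (hh b a2) UNIV - infsum (hh b a1) UNIV \<le> L * infsum (hh b a2) UNIV" by simp
  have S0: "0 \<le> infsum (hh b a2) UNIV"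
    using hh_pos[OF b0] alo by (intro infsum_nonneg) (auto intro: less_imp_le)
  have "infsum (hh b a2) UNIV \<le> infsum (hh b alo) UNIV"
    using alo b0 by (intro infsum_mono hh_summable hh_anti) auto
  moreover have "L \<le> (\<beta> * (m2 - m1)) * exp (\<beta> * (mb - ma)) * (1 + gB alo)"
  proof -
    have e: "a1 - a2 = \<beta> * (m2 - m1)" by (simp add: a1_def a2_def algebra_simps)
    have "exp (a1 - a2) \<le> exp (\<beta> * (mb - ma))" unfolding e using \<beta> m by (intro exp_mono mult_left_mono) auto
    moreover have "0 \<le> 1 + gB alo" using gB_pos[OF alo(1)] by simp
    moreover have "0 \<le> a1 - a2" using a12 by simp
    ultimately show ?thesis unfolding L_def e[symmetric] by (intro mult_right_mono mult_left_mono) auto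
  qed
  moreover have "0 \<le> L" unfolding L_def using a12 gB_pos[OF alo(1)] by (intro mult_nonneg_nonneg) auto
  ultimately have "L * infsum (hh b a2) UNIV \<le> ((\<beta> * (m2 - m1)) * exp (\<beta> * (mb - ma)) * (1 + gB alo)) * infsum (hh b alo) UNIV"
    using S0 by (intro mult_mono) auto
  moreover have "((\<beta> * (m2 - m1)) * exp (\<beta> * (mb - ma)) * (1 + gB alo)) * infsum (hh b alo) UNIV =
      (\<beta> * exp (\<beta> * (mb - ma)) * (1 + gB alo) * infsum (hh b alo) UNIV) * (m2 - m1)"
    by (simp only: mult_ac)
  ultimately have fin: "infsum (hh b a2) UNIV - infsum (hh b a1) UNIV \<le>
      (\<beta> * exp (\<beta> * (mb - ma)) * (1 + gB alo) * infsum (hh b alo) UNIV) * (m2 - m1)"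
    using 1 by linarith
  have e: "bose_sum \<beta> m1 = infsum (hh b a1) UNIV" "bose_sum \<beta> m2 = infsum (hh b a2) UNIV"
    "bose_sum \<beta> mb = infsum (hh b alo) UNIV"
    by (simp_all add: bose_hh b_def a1_def a2_def alo_def)
  show ?thesis unfolding e using fin by (simp add: alo_def)
qed

lemma bsum_cont:
  assumes "mb < 0"
  shows "continuous_on {ma..mb} (bose_sum \<beta>)"
proof -
  define L where "L = \<beta> * exp (\<beta> * (mb - ma)) * (1 + gB (- \<beta> * mb)) * bose_sum \<beta> mb"
  have "L-lipschitz_on {ma..mb} (bose_sum \<beta>)"
  proof (rule lipschitz_onI)
    fix x y assume xy: "x \<in> {ma..mb}" "y \<in> {ma..mb}"
    show "dist (bose_sum \<beta> x) (bose_sum \<beta> y) \<le> L * dist x y"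
    proof (cases "x \<le> y")
      case True
      have "bose_sum \<beta> y - bose_sum \<beta> x \<le> L * (y - x)"
        using bsum_lip[of x y mb ma] True xy assms by (simp add: L_def)
      moreover have "bose_sum \<beta> x \<le> bose_sum \<beta> y" using bsum_mono[of x y] True xy assms by simp
      ultimately show ?thesis using True by (simp add: dist_real_def)
    next
      case False
      have "bose_sum \<beta> x - bose_sum \<beta> y \<le> L * (x - y)"
        using bsum_lip[of y x mb ma] False xy assms by (simp add: L_def)
      moreover have "bose_sum \<beta> y \<le> bose_sum \<beta> x" using bsum_mono[of y x] False xy assms by simp
      ultimately show ?thesis using False by (simp add: dist_real_def)
    qed
  next
    have "0 \<le> bose_sum \<beta> mb"
      unfolding bose_hh using \<beta> assms hh_pos
      by (intro infsum_nonneg) (auto intro: less_imp_le simp: mult_pos_neg)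
    moreover have "0 < 1 + gB (- \<beta> * mb)" using gB_pos[of "- \<beta> * mb"] \<beta> assms by (simp add: mult_pos_neg)
    ultimately show "0 \<le> L" unfolding L_def using \<beta> by simp
  qed
  thus ?thesis by (rule lipschitz_on_continuous_on)
qed

end




lemma zeta32_pos: "zeta32 > 0"
proof -
  have "summable (\<lambda>n. real n powr (-3/2))" by (subst summable_real_powr_iff) simp
  hence "summable (\<lambda>n. real (Suc n) powr (-3/2))" by (subst summable_Suc_iff)
  moreover have "(\<lambda>n. real (Suc n) powr (-3/2)) = (\<lambda>k. 1 / (real (Suc k)) powr (3/2))"
    by (rule ext) (simp add: powr_minus_divide)
  ultimately have "summable (\<lambda>k. 1 / (real (Suc k)) powr (3/2))" by simp
  thus ?thesis unfolding zeta32_def by (rule suminf_pos) simp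
qed

lemma partA:
  assumes \<beta>: "\<beta> > 0" and \<eta>: "\<eta> > 0" and v0: "v0 > 0"
  shows "\<exists>!m. m < 0 \<and> bose_sum \<beta> m = (\<mu> - m) * \<eta> / v0"
proof -
  define F where "F m = bose_sum \<beta> m - (\<mu> - m) * \<eta> / v0" for m
  have Fstrict: "F m1 < F m2" if "m1 < m2" "m2 < 0" for m1 m2
  proof -
    have "bose_sum \<beta> m1 < bose_sum \<beta> m2" using bsum_strict[OF \<beta> that] .
    moreover have "(\<mu> - m2) * \<eta> / v0 \<le> (\<mu> - m1) * \<eta> / v0"
      using that \<eta> v0 by (intro divide_right_mono mult_right_mono) auto
    ultimately show ?thesis by (simp add: F_def)
  qed
  define R where "R = (\<bar>\<mu>\<bar> + 1 / \<beta>) * \<eta> / v0"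
  have R0: "R \<ge> 0" using \<beta> \<eta> v0 by (simp add: R_def)
  define x where "x = 1 / (R + 2)"
  have x0: "0 < x" "x < 1" using R0 by (auto simp: x_def)
  define mb where "mb = - x / \<beta>"
  have mb0: "mb < 0" using x0 \<beta> by (simp add: mb_def)
  have amb: "- \<beta> * mb = x" using \<beta> by (simp add: mb_def)
  have Fmb: "F mb \<ge> 0"
  proof -
    have b: "4 * pi^2 * \<beta> > 0" using \<beta> by simp
    have "hh (4 * pi^2 * \<beta>) x 0 \<le> bose_sum \<beta> mb"
      unfolding bose_hh amb by (rule hh_ge0[OF b x0(1)])
    moreover have "hh (4 * pi^2 * \<beta>) x 0 = gB x" by (simp add: hh_def)
    moreover have "1 / x - 1 \<le> gB x" by (rule gB_ge[OF x0])
    moreover have "1 / x - 1 = R + 1" using R0 by (simp add: x_def)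
    moreover have "(\<mu> - mb) * \<eta> / v0 \<le> R"
    proof -
      have "\<mu> - mb \<le> \<bar>\<mu>\<bar> + 1 / \<beta>"
        using x0 \<beta> by (simp add: mb_def) (smt (verit, best) divide_right_mono)
      thus ?thesis unfolding R_def using \<eta> v0 by (intro divide_right_mono mult_right_mono) auto
    qed
    ultimately show ?thesis by (simp add: F_def)
  qed
  define B where "B = bose_sum \<beta> (-1)"
  define ma where "ma = min (min (-1) (mb - 1)) (\<mu> - (B + 1) * v0 / \<eta>)"
  have mamb: "ma \<le> mb" by (simp add: ma_def)
  have Fma: "F ma \<le> 0"
  proof -
    have "bose_sum \<beta> ma \<le> B" unfolding B_def by (rule bsum_mono[OF \<beta>]) (auto simp: ma_def)
    moreover have "B + 1 \<le> (\<mu> - ma) * \<eta> / v0"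
    proof -
      have "(B + 1) * v0 / \<eta> \<le> \<mu> - ma" by (simp add: ma_def)
      hence "(B + 1) * v0 / \<eta> * \<eta> / v0 \<le> (\<mu> - ma) * \<eta> / v0"
        using \<eta> v0 by (intro divide_right_mono mult_right_mono) auto
      thus ?thesis using \<eta> v0 by simp
    qed
    ultimately show ?thesis by (simp add: F_def)
  qed
  have cont: "continuous_on {ma..mb} F"
    unfolding F_def using v0 by (intro continuous_intros bsum_cont[OF \<beta> mb0]) auto
  obtain m where m: "ma \<le> m" "m \<le> mb" "F m = 0"
    using IVT'[of F ma 0 mb, OF Fma Fmb mamb cont] by blast
  have m0: "m < 0" using m mb0 by simp
  show ?thesis
  proof (rule ex1I[of _ m])
    show "m < 0 \<and> bose_sum \<beta> m = (\<mu> - m) * \<eta> / v0" using m m0 by (simp add: F_def)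
  next
    fix m' assume m': "m' < 0 \<and> bose_sum \<beta> m' = (\<mu> - m') * \<eta> / v0"
    hence Fm': "F m' = 0" by (simp add: F_def)
    show "m' = m"
    proof (rule ccontr)
      assume "m' \<noteq> m"
      hence "m' < m \<or> m < m'" by linarith
      thus False using Fstrict[of m' m] Fstrict[of m m'] m0 m' Fm' m(3) by auto
    qed
  qed
qed




lemma core_bounds:
  fixes D t c0 v0 \<mu> m :: real
  defines "E \<equiv> 4 * pi^2 * D"
  defines "r \<equiv> sqrt (4 * pi^2 * D)"
  assumes D: "D > 0" and c0: "0 < c0" "c0 \<le> 1" and v0: "v0 > 0" and t1: "t \<ge> 1" and rt: "r \<le> t"
    and m: "m < 0"
  shows "exp (-(-(D / t^2) * m + 3)) * (t^3 / r^3) \<le> bose_sum (D / t^2) m"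
    and "bose_sum (D / t^2) m \<le> gB (-(D / t^2) * m) + 156 * (t^3 / r^3)"
proof -
  define b where "b = E / t^2"
  define a where "a = -(D / t^2) * m"
  have t0: "t > 0" using t1 by simp
  have E0: "E > 0" using D by (simp add: E_def)
  have r0: "r > 0" using E0 by (simp add: r_def E_def[symmetric])
  have rE: "r^2 = E" using E0 by (simp add: r_def E_def[symmetric])
  have b0: "b > 0" using E0 t0 by (simp add: b_def)
  have q: "D / t^2 > 0" using D t0 by simp
  have "(D / t^2) * (-m) > 0" by (rule mult_pos_pos[OF q]) (use m in simp)
  hence a0: "a > 0" by (simp add: a_def)
  have bb: "4 * pi^2 * (D / t^2) = b" by (simp add: b_def E_def)
  have S: "bose_sum (D / t^2) m = infsum (hh b a) UNIV" by (simp only: bose_hh bb a_def)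
  have b1: "b \<le> 1"
  proof -
    have "r^2 \<le> t^2" using rt r0 by (intro power_mono) auto
    thus ?thesis using t0 rE by (simp add: b_def)
  qed
  have sb: "sqrt b = r / t" using t0 by (simp add: b_def r_def E_def real_sqrt_divide)
  have w3: "(1 / sqrt b)^3 = t^3 / r^3" by (simp add: sb power_divide)
  show "exp (-(-(D / t^2) * m + 3)) * (t^3 / r^3) \<le> bose_sum (D / t^2) m"
    using hh_lower[OF b0 b1 a0] by (simp add: S w3 a_def)
  define K where "K = nat \<lceil>t / r\<rceil>"
  have tr1: "t / r \<ge> 1" using rt r0 by simp
  have K1: "real K \<ge> t / r" using tr1 by (simp add: K_def)
  have K2: "real K \<le> 2 * (t / r)" using tr1 by (simp add: K_def) linarith
  have Kn: "K \<ge> 1" using K1 tr1 by simp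
  have up: "infsum (hh b a) UNIV \<le> hh b a 0 + (26 * real K / b + 104 / (b^2 * real K))"
    by (rule hh_upper[OF b0 a0 Kn])
  have h0: "hh b a 0 = gB a" by (simp add: hh_def)
  have u1: "26 * real K / b \<le> 52 * (t^3 / r^3)"
  proof -
    have "26 * real K / b = 26 * real K * t^2 / r^2" using t0 by (simp add: b_def rE)
    also have "\<dots> \<le> 26 * (2 * (t / r)) * t^2 / r^2" using K2 r0
      by (intro divide_right_mono mult_right_mono mult_left_mono) auto
    also have "\<dots> = 52 * (t^3 / r^3)" by (simp add: power2_eq_square power3_eq_cube)
    finally show ?thesis .
  qed
  have u2: "104 / (b^2 * real K) \<le> 104 * (t^3 / r^3)"
  proof -
    have bK: "b^2 * real K > 0" using b0 Kn by simp
    have p: "b^2 * (t / r) > 0" using b0 t0 r0 by simp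
    have q: "b^2 * (t / r) \<le> b^2 * real K" using K1 b0 by (intro mult_left_mono) auto
    have "104 / (b^2 * real K) \<le> 104 / (b^2 * (t / r))"
      by (rule divide_left_mono[OF q _ mult_pos_pos[OF bK p]]) simp
    also have "104 / (b^2 * (t / r)) = 104 * (t^3 / r^3)"
      using t0 r0 by (simp add: b_def rE[symmetric] power2_eq_square power3_eq_cube field_simps)
    finally show ?thesis .
  qed
  show "bose_sum (D / t^2) m \<le> gB (-(D / t^2) * m) + 156 * (t^3 / r^3)"
    unfolding S a_def[symmetric] using up u1 u2 h0 by linarith
qed




lemma beta_eq:
  assumes "\<eta> > 0"
  shows "\<kappa> * beta_c \<eta> = (\<kappa> * zeta32 powr (2/3) / (4*pi)) / (\<eta> powr (1/3))^2"
proof -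
  have z: "zeta32 > 0" by (rule zeta32_pos)
  have "(\<eta> / zeta32) powr (-(2/3)) = inverse ((\<eta> / zeta32) powr (2/3))" by (rule powr_minus)
  also have "(\<eta> / zeta32) powr (2/3) = \<eta> powr (2/3) / zeta32 powr (2/3)"
    using assms z by (simp add: powr_divide)
  also have "\<eta> powr (2/3) = (\<eta> powr (1/3))^2"
    using assms by (simp add: power2_eq_square flip: powr_add)
  finally have "(\<eta> / zeta32) powr (-(2/3)) = zeta32 powr (2/3) / (\<eta> powr (1/3))^2" by simp
  thus ?thesis by (simp add: beta_c_def)
qed

lemma partB:
  assumes \<kappa>: "\<kappa> > 0" and v0: "v0 > 0" and c0: "0 < c0" "c0 \<le> 1"
  shows "\<exists>c C \<eta>0 :: real. 0 < c \<and> c \<le> 1 \<and> C > 0 \<and> \<eta>0 > 0 \<and>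
               (\<forall>\<eta> \<mu> m :: real. \<eta> \<ge> \<eta>0 \<and> - (\<eta> powr (2/3)) / c0 \<le> \<mu> \<and> \<mu> \<le> 1 / c0 \<and>
                  m < 0 \<and> bose_sum (\<kappa> * beta_c \<eta>) m = (\<mu> - m) * \<eta> / v0 \<longrightarrow>
                  c \<le> \<mu> - m \<and> \<mu> - m \<le> 1 / c \<and>
                  (\<mu> \<ge> 0 \<longrightarrow> - m \<le> C) \<and>
                  (\<mu> < 0 \<longrightarrow> - m \<le> C * \<eta> powr (2/3)) \<and>
                  c * \<eta> \<le> bose_sum (\<kappa> * beta_c \<eta>) m \<and>
                  bose_sum (\<kappa> * beta_c \<eta>) m \<le> \<eta> / c)"
proof -
  define D where "D = \<kappa> * zeta32 powr (2/3) / (4*pi)"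
  have D0: "D > 0" using \<kappa> zeta32_pos by (simp add: D_def)
  define r where "r = sqrt (4 * pi^2 * D)"
  have r0: "r > 0" using D0 by (simp add: r_def)
  define A where "A = D * (1 + 1 / c0)"
  define c1 where "c1 = v0 * exp (-(A + 3)) / r^3"
  have c1p: "c1 > 0" using v0 r0 by (simp add: c1_def)
  define slo where "slo = min 1 c1"
  have slo: "0 < slo" "slo \<le> 1" using c1p by (auto simp: slo_def)
  define c3 where "c3 = v0 * (1 / D + 156 / r^3)"
  define shi where "shi = max (2 / c0) c3"
  have shi: "shi \<ge> 2 / c0" "shi \<ge> c3" by (auto simp: shi_def)
  have shi0: "shi > 0" using shi(1) c0 by (smt (verit) divide_pos_pos)
  define c where "c = min slo (min (1 / shi) (min (slo / v0) (v0 / shi)))"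
  have c0': "c > 0" using slo shi0 v0 by (simp add: c_def)
  have cs: "c \<le> slo" "c \<le> 1 / shi" "c \<le> slo / v0" "c \<le> v0 / shi" by (simp_all add: c_def)
  define C where "C = shi + 1 / c0"
  have C0: "C > 0" unfolding C_def using shi0 c0(1) by (intro add_pos_pos) auto
  define \<eta>0 where "\<eta>0 = max 1 (r^3)"
  have main: "c \<le> \<mu> - m \<and> \<mu> - m \<le> 1 / c \<and>
                  (\<mu> \<ge> 0 \<longrightarrow> - m \<le> C) \<and>
                  (\<mu> < 0 \<longrightarrow> - m \<le> C * \<eta> powr (2/3)) \<and>
                  c * \<eta> \<le> bose_sum (\<kappa> * beta_c \<eta>) m \<and>
                  bose_sum (\<kappa> * beta_c \<eta>) m \<le> \<eta> / c"
    if H: "\<eta> \<ge> \<eta>0" "- (\<eta> powr (2/3)) / c0 \<le> \<mu>" "\<mu> \<le> 1 / c0" "m < 0"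
          "bose_sum (\<kappa> * beta_c \<eta>) m = (\<mu> - m) * \<eta> / v0" for \<eta> \<mu> m
  proof -
    have \<eta>1: "\<eta> \<ge> 1" using H(1) by (simp add: \<eta>0_def)
    have \<eta>r: "\<eta> \<ge> r^3" using H(1) by (simp add: \<eta>0_def)
    have \<eta>0: "\<eta> > 0" using \<eta>1 by simp
    define t where "t = \<eta> powr (1/3)"
    have t0: "t > 0" using \<eta>0 by (simp add: t_def)
    have t3: "t^3 = \<eta>"
    proof -
      have "t^3 = \<eta> powr (1/3) * \<eta> powr (1/3) * \<eta> powr (1/3)" by (simp add: t_def power3_eq_cube)
      also have "\<dots> = \<eta> powr (1/3 + 1/3 + 1/3)" by (simp only: powr_add)
      also have "\<dots> = \<eta>" using \<eta>0 by simp
      finally show ?thesis .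
    qed
    have t2: "\<eta> powr (2/3) = t^2"
      using \<eta>0 by (simp add: t_def power2_eq_square flip: powr_add)
    have t1: "t \<ge> 1" using \<eta>1 by (simp add: t_def ge_one_powr_ge_zero)
    have rt: "r \<le> t"
      using \<eta>r t3 t0 by (intro power_le_imp_le_base[of r 2 t]) (auto simp: power3_eq_cube)
    have beq: "\<kappa> * beta_c \<eta> = D / t^2" using beta_eq[OF \<eta>0, of \<kappa>] by (simp add: D_def t_def)
    define S where "S = bose_sum (D / t^2) m"
    define s where "s = \<mu> - m"
    have Ss: "S = s * (t^3 / v0)" using H(5) by (simp add: S_def s_def beq t3)
    have tv: "t^3 / v0 > 0" using t0 v0 by simp
    have lowS: "exp (-(-(D / t^2) * m + 3)) * (t^3 / r^3) \<le> S"
      using core_bounds(1)[OF D0 c0 v0 t1 _ H(4)] rt by (simp add: S_def r_def)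
    have upS: "S \<le> gB (-(D / t^2) * m) + 156 * (t^3 / r^3)"
      using core_bounds(2)[OF D0 c0 v0 t1 _ H(4)] rt by (simp add: S_def r_def)
    have mu_lo: "- \<mu> \<le> t^2 / c0" using H(2) t2 by (simp add: neg_divide_le_eq)
    have Dt: "D / t^2 \<le> D" using t1 D0 by (simp add: divide_le_eq)
    have Dt0: "D / t^2 > 0" using D0 t0 by simp
    have s_lo: "slo \<le> s"
    proof (cases "s \<ge> 1")
      case True thus ?thesis using slo by simp
    next
      case False
      have "-m \<le> 1 + t^2 / c0" using False mu_lo by (simp add: s_def)
      hence "(D / t^2) * (-m) \<le> (D / t^2) * (1 + t^2 / c0)" using Dt0 by (intro mult_left_mono) auto
      also have "\<dots> = D / t^2 + D / c0" using t0 by (simp add: field_simps)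
      also have "\<dots> \<le> A" using Dt by (simp add: A_def algebra_simps)
      finally have aA: "-(D / t^2) * m \<le> A" by simp
      have "exp (-(A + 3)) * (t^3 / r^3) \<le> exp (-(-(D / t^2) * m + 3)) * (t^3 / r^3)"
        using aA r0 t0 by (intro mult_right_mono) auto
      also have "\<dots> \<le> s * (t^3 / v0)" using lowS Ss by simp
      also have "exp (-(A + 3)) * (t^3 / r^3) = c1 * (t^3 / v0)"
        using v0 r0 by (simp add: c1_def)
      finally have "c1 * (t^3 / v0) \<le> s * (t^3 / v0)" .
      hence "c1 \<le> s" by (rule mult_right_le_imp_le[OF _ tv])
      thus ?thesis by (simp add: slo_def)
    qed
    have s_hi: "s \<le> shi"
    proof (cases "s \<le> 2 / c0")
      case True thus ?thesis using shi by simp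
    next
      case False
      have "-m \<ge> 1 / c0" using False H(3) by (simp add: s_def)
      hence "(D / t^2) * (1 / c0) \<le> (D / t^2) * (-m)" by (rule mult_left_mono) (use Dt0 in simp)
      hence am: "(D / t^2) * (1 / c0) \<le> -(D / t^2) * m" by simp
      have ap: "(D / t^2) * (1 / c0) > 0" by (rule mult_pos_pos[OF Dt0]) (use c0 in simp)
      have "gB (-(D / t^2) * m) \<le> 1 / (-(D / t^2) * m)"
        using ap am by (intro gB_le_inv) linarith
      also have "\<dots> \<le> 1 / ((D / t^2) * (1 / c0))"
      proof -
        have apm: "-(D / t^2) * m > 0" using ap am by linarith
        show ?thesis by (rule divide_left_mono[OF am _ mult_pos_pos[OF apm ap]]) simp
      qed
      also have "\<dots> = c0 * t^2 / D" using t0 D0 c0 by (simp add: field_simps)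
      also have "\<dots> \<le> t^3 / D"
      proof -
        have "c0 * t^2 \<le> 1 * t^2" using c0 t0 by (intro mult_right_mono) auto
        also have "\<dots> \<le> t * t^2" using t1 t0 by (intro mult_right_mono) auto
        finally show ?thesis using D0 by (intro divide_right_mono) (auto simp: power3_eq_cube power2_eq_square)
      qed
      finally have g: "gB (-(D / t^2) * m) \<le> t^3 / D" .
      have "s * (t^3 / v0) \<le> t^3 / D + 156 * (t^3 / r^3)" using upS g Ss by simp
      also have "\<dots> = c3 * (t^3 / v0)" using v0 by (simp add: c3_def field_simps)
      finally have "s * (t^3 / v0) \<le> c3 * (t^3 / v0)" .
      hence "s \<le> c3" by (rule mult_right_le_imp_le[OF _ tv])
      thus ?thesis using shi by simp
    qed
    have spos: "s > 0" using s_lo slo by simp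
    have r1: "c \<le> s" using cs s_lo by simp
    have r2: "s \<le> 1 / c"
    proof -
      have "s \<le> shi" by (rule s_hi)
      also have "shi \<le> 1 / c" using cs(2) c0' shi0 by (simp add: field_simps)
      finally show ?thesis .
    qed
    have ic: "1 / c0 > 0" using c0 by simp
    have r3: "\<mu> \<ge> 0 \<longrightarrow> - m \<le> C" using s_hi ic unfolding s_def C_def by linarith
    have r4: "\<mu> < 0 \<longrightarrow> - m \<le> C * \<eta> powr (2/3)"
    proof
      assume "\<mu> < 0"
      have t21: "t^2 \<ge> 1" using t1 by simp
      have "- m = s - \<mu>" by (simp add: s_def)
      also have "\<dots> \<le> shi + t^2 / c0" using s_hi mu_lo by simp
      also have "\<dots> \<le> shi * t^2 + t^2 / c0" using shi0 t21 by simp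
      also have "\<dots> = C * \<eta> powr (2/3)" by (simp add: C_def t2 algebra_simps)
      finally show "- m \<le> C * \<eta> powr (2/3)" .
    qed
    have Seta: "bose_sum (\<kappa> * beta_c \<eta>) m = s * \<eta> / v0" using H(5) by (simp add: s_def)
    have r5: "c * \<eta> \<le> bose_sum (\<kappa> * beta_c \<eta>) m"
    proof -
      have "c * \<eta> \<le> (slo / v0) * \<eta>" using cs \<eta>0 by (intro mult_right_mono) auto
      also have "\<dots> \<le> (s / v0) * \<eta>" using s_lo v0 \<eta>0 by (intro mult_right_mono divide_right_mono) auto
      finally show ?thesis using Seta by simp
    qed
    have r6: "bose_sum (\<kappa> * beta_c \<eta>) m \<le> \<eta> / c"
    proof -
      have "s * \<eta> / v0 \<le> shi * \<eta> / v0" using s_hi v0 \<eta>0 by (intro divide_right_mono mult_right_mono) auto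
      also have "shi * \<eta> / v0 = \<eta> * (shi / v0)" by simp
      also have "shi / v0 \<le> 1 / c" using cs(4) c0' shi0 v0 by (simp add: field_simps)
      hence "\<eta> * (shi / v0) \<le> \<eta> * (1 / c)" using \<eta>0 by (intro mult_left_mono) auto
      finally show ?thesis using Seta by simp
    qed
    show ?thesis using r1 r2 r3 r4 r5 r6 by (simp add: s_def)
  qed
  show ?thesis
    apply (rule exI[of _ c], rule exI[of _ C], rule exI[of _ \<eta>0])
    using c0' cs slo C0 main by (auto simp: \<eta>0_def)
qed


theorem lemmaA1:
  shows "(\<forall>\<beta> \<eta> v0 \<mu> :: real. \<beta> > 0 \<and> \<eta> > 0 \<and> v0 > 0 \<longrightarrow>
            (\<exists>!m. m < 0 \<and> bose_sum \<beta> m = (\<mu> - m) * \<eta> / v0))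
       \<and> (\<forall>\<kappa> v0 c0 :: real. \<kappa> > 0 \<and> v0 > 0 \<and> 0 < c0 \<and> c0 \<le> 1 \<longrightarrow>
            (\<exists>c C \<eta>0 :: real. 0 < c \<and> c \<le> 1 \<and> C > 0 \<and> \<eta>0 > 0 \<and>
               (\<forall>\<eta> \<mu> m :: real. \<eta> \<ge> \<eta>0 \<and> - (\<eta> powr (2/3)) / c0 \<le> \<mu> \<and> \<mu> \<le> 1 / c0 \<and>
                  m < 0 \<and> bose_sum (\<kappa> * beta_c \<eta>) m = (\<mu> - m) * \<eta> / v0 \<longrightarrow>
                  c \<le> \<mu> - m \<and> \<mu> - m \<le> 1 / c \<and>
                  (\<mu> \<ge> 0 \<longrightarrow> - m \<le> C) \<and>
                  (\<mu> < 0 \<longrightarrow> - m \<le> C * \<eta> powr (2/3)) \<and>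
                  c * \<eta> \<le> bose_sum (\<kappa> * beta_c \<eta>) m \<and>
                  bose_sum (\<kappa> * beta_c \<eta>) m \<le> \<eta> / c)))"
proof (intro conjI)
  show "\<forall>\<beta> \<eta> v0 \<mu> :: real. \<beta> > 0 \<and> \<eta> > 0 \<and> v0 > 0 \<longrightarrow>
            (\<exists>!m. m < 0 \<and> bose_sum \<beta> m = (\<mu> - m) * \<eta> / v0)"
    using partA by blast
next
  show "\<forall>\<kappa> v0 c0 :: real. \<kappa> > 0 \<and> v0 > 0 \<and> 0 < c0 \<and> c0 \<le> 1 \<longrightarrow>
            (\<exists>c C \<eta>0 :: real. 0 < c \<and> c \<le> 1 \<and> C > 0 \<and> \<eta>0 > 0 \<and>
               (\<forall>\<eta> \<mu> m :: real. \<eta> \<ge> \<eta>0 \<and> - (\<eta> powr (2/3)) / c0 \<le> \<mu> \<and> \<mu> \<le> 1 / c0 \<and>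
                  m < 0 \<and> bose_sum (\<kappa> * beta_c \<eta>) m = (\<mu> - m) * \<eta> / v0 \<longrightarrow>
                  c \<le> \<mu> - m \<and> \<mu> - m \<le> 1 / c \<and>
                  (\<mu> \<ge> 0 \<longrightarrow> - m \<le> C) \<and>
                  (\<mu> < 0 \<longrightarrow> - m \<le> C * \<eta> powr (2/3)) \<and>
                  c * \<eta> \<le> bose_sum (\<kappa> * beta_c \<eta>) m \<and>
                  bose_sum (\<kappa> * beta_c \<eta>) m \<le> \<eta> / c))"
    using partB by blast
qed

end
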